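(* Let $p\ge 0$. Then for all $r\in(0,1)$, $$2^{1+p}K(1/2)\,(r-r^2)^p\le (1-r)^pK(1-r)+r^pK(r).$$
   Context: $K(x)={\cal K}(\sqrt x)=\frac\pi2\,{}_2F_1(1/2,1/2;1;x)$ for $x\in[0,1)$, where ${\cal K}(r)=\int_0^{\pi/2}(1-r^2\sin^2t)^{-1/2}dt$ is the complete elliptic integral of the first kind. *)

theory Defs
  imports "HOL-Analysis.Analysis"
begin

definition ellipK :: "real \<Rightarrow> real" where
  "ellipK r = integral {0..pi/2} (\<lambda>t. 1 / sqrt (1 - r\<^sup>2 * (sin t)\<^sup>2))"

text \<open>K(x) = ellipK(sqrt x), parameter convention, for x in [0,1).\<close>
definition K :: "real \<Rightarrow> real" where
  "K x = ellipK (sqrt x)"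

end

theory Submission
  imports Defs
begin

lemma conv2:
  fixes x y :: real assumes "x>0" "y>0"
  shows "2 / sqrt ((x\<^sup>2+y\<^sup>2)/2) \<le> 1/x + 1/y"
proof -
  have sq: "0 \<le> (x-y)\<^sup>2" by simp
  hence "4*(x* y) \<le> (x+y)*(x+y)" by (simp add: power2_eq_square algebra_simps)
  hence "4/(x+y) \<le> (x+y)/(x* y)" using assms by (simp add: divide_simps)
  also have "(x+y)/(x* y) = 1/x+1/y" using assms by (simp add: field_simps)
  finally have a: "4/(x+y) \<le> 1/x+1/y" .
  have "(x+y)\<^sup>2 \<le> 2*(x\<^sup>2+y\<^sup>2)" using sq by (simp add: power2_eq_square algebra_simps)
  hence h1: "x+y \<le> sqrt (2*(x\<^sup>2+y\<^sup>2))" using assms by (simp add: real_le_rsqrt)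
  have "0 < x\<^sup>2+y\<^sup>2" using assms by (simp add: add_pos_pos)
  hence sp: "sqrt (2*(x\<^sup>2+y\<^sup>2)) > 0" by simp
  have "4/sqrt (2*(x\<^sup>2+y\<^sup>2)) \<le> 4/(x+y)"
    using frac_le[of 4 4 "x+y" "sqrt (2*(x\<^sup>2+y\<^sup>2))"] h1 sp assms by simp
  moreover have "sqrt (2*(x\<^sup>2+y\<^sup>2)) = 2 * sqrt ((x\<^sup>2+y\<^sup>2)/2)"
  proof -
    have "2*(x\<^sup>2+y\<^sup>2) = 2\<^sup>2 * ((x\<^sup>2+y\<^sup>2)/2)" by simp
    hence "sqrt (2*(x\<^sup>2+y\<^sup>2)) = sqrt (2\<^sup>2) * sqrt ((x\<^sup>2+y\<^sup>2)/2)"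
      by (metis real_sqrt_mult)
    thus ?thesis by simp
  qed
  ultimately show ?thesis using a by simp
qed

lemma pos1:
  fixes s b :: real assumes "0\<le>s" "s\<le>1" "b<1"
  shows "1 - b * s > 0"
proof (cases "b \<le> 0")
  case True
  then have "b * s \<le> 0" using assms by (simp add: mult_nonpos_nonneg)
  then show ?thesis by simp
next
  case False
  then have "b * s \<le> b" using assms by (simp add: mult_left_le)
  then show ?thesis using assms by simp
qed

lemma hconv:
  fixes s r :: real assumes "0\<le>s" "s\<le>1" "0<r" "r<1"
  shows "2 * (1/sqrt(1-(1/2) * s)) \<le> 1/sqrt(1-(1-r) * s) + 1/sqrt(1-r * s)"
proof -
  have p1: "1-(1-r) * s > 0" "1-r * s>0" using assms pos1 by auto
  have "(sqrt(1-(1-r) * s))\<^sup>2 + (sqrt(1-r * s))\<^sup>2 = 2*(1-(1/2) * s)" using p1 by (simp add: algebra_simps)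
  hence e: "((sqrt(1-(1-r) * s))\<^sup>2 + (sqrt(1-r * s))\<^sup>2)/2 = 1-(1/2) * s" by simp
  have c: "2 / sqrt (((sqrt(1-(1-r) * s))\<^sup>2 + (sqrt(1-r * s))\<^sup>2)/2) \<le> 1/sqrt(1-(1-r) * s) + 1/sqrt(1-r * s)"
    using p1 by (intro conv2) auto
  show ?thesis using c unfolding e by simp
qed

lemma hmono:
  fixes s a b :: real assumes "0\<le>s" "s\<le>1" "a \<le> b" "b<1"
  shows "1/sqrt(1-a * s) \<le> 1/sqrt(1-b * s)"
proof -
  have "1-b * s>0" using assms pos1 by auto
  moreover have "1-b * s \<le> 1-a * s" using assms by (simp add: mult_right_mono)
  ultimately show ?thesis by (intro divide_left_mono) (auto intro: mult_pos_pos)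
qed

lemma weights:
  fixes p r :: real assumes "p\<ge>0" "0<r" "r<1"
  shows "2 powr (1+p) * (r-r\<^sup>2) powr p \<le> (1-r) powr p + r powr p"
proof -
  define A where "A = (1-r) powr p" define B where "B = r powr p"
  have A: "A>0" and B: "B>0" using assms by (auto simp: A_def B_def)
  have AB: "(r-r\<^sup>2) powr p = A* B" unfolding A_def B_def
    using assms by (simp add: powr_mult[symmetric] power2_eq_square algebra_simps)
  have "0 \<le> (r - 1/2)\<^sup>2" by simp
  hence le: "(r-r\<^sup>2)*(2*2) \<le> 1" by (simp add: power2_eq_square algebra_simps)
  have nn: "0 \<le> r-r\<^sup>2" using assms by (simp add: power2_eq_square mult_le_cancel_right1 less_imp_le)
  have "(2 powr p)^2 = (2*2) powr p" using powr_mult[of 2 2 p] by (simp add: power2_eq_square)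
  moreover have "((r-r\<^sup>2)*(2*2)) powr p = (r-r\<^sup>2) powr p * (2*2) powr p"
    by (rule powr_mult)
  ultimately have "A* B*(2 powr p)^2 = ((r-r\<^sup>2)*(2*2)) powr p" by (simp only: AB)
  also have "\<dots> \<le> 1 powr p" using le nn assms by (intro powr_mono2) auto
  finally have q: "A* B*(2 powr p)^2 \<le> 1" by simp
  have "sqrt (A* B) * 2 powr p \<le> 1"
  proof -
    have "(sqrt (A* B) * 2 powr p)\<^sup>2 \<le> 1" using q A B by (simp add: power_mult_distrib)
    thus ?thesis using power2_le_imp_le[of "sqrt (A* B) * 2 powr p" 1] by simp
  qed
  moreover have "2* sqrt(A* B) \<le> A+B" using A B
    using arith_geo_mean_sqrt[of A B] by simp
  ultimately have "2 * 2 powr p * (A* B) \<le> A+B"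
  proof -
    have ss: "sqrt(A* B)* sqrt(A* B) = A* B" using A B by simp
    have "2 * 2 powr p * (A* B) = 2 * 2 powr p * (sqrt(A* B)* sqrt(A* B))" by (simp only: ss)
    also have "\<dots> = 2 * sqrt(A* B) * (sqrt (A* B) * 2 powr p)" by (simp only: mult_ac)
    also have "2 * sqrt(A* B) * (sqrt (A* B) * 2 powr p) \<le> 2 * sqrt(A* B)" using `sqrt (A* B) * 2 powr p \<le> 1`
      using A B by (intro mult_left_le) auto
    finally show ?thesis using `2* sqrt(A* B) \<le> A+B` by simp
  qed
  thus ?thesis unfolding AB by (simp add: A_def B_def powr_add)
qed

lemma pw:
  fixes p r s :: real assumes "p\<ge>0" "0<r" "r<1" "0\<le>s" "s\<le>1"
  shows "2 powr (1+p) * (r-r\<^sup>2) powr p * (1/sqrt(1-(1/2) * s))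
     \<le> (1-r) powr p * (1/sqrt(1-(1-r) * s)) + r powr p * (1/sqrt(1-r * s))"
proof -
  define A where "A = (1-r) powr p" define B where "B = r powr p"
  define u where "u = 1/sqrt(1-(1-r) * s)" define v where "v = 1/sqrt(1-r * s)"
  define w where "w = 1/sqrt(1-(1/2) * s)"
  have sg: "0 \<le> (A-B)*(u-v)"
  proof (cases "r \<le> 1/2")
    case True
    have "B \<le> A" unfolding A_def B_def using assms True by (intro powr_mono2) auto
    moreover have "v \<le> u" unfolding u_def v_def using assms True by (intro hmono) auto
    ultimately show ?thesis by simp
  next
    case False
    have "A \<le> B" unfolding A_def B_def using assms False by (intro powr_mono2) auto
    moreover have "u \<le> v" unfolding u_def v_def using assms False by (intro hmono) auto
    ultimately show ?thesis by (simp add: mult_nonpos_nonpos)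
  qed
  have w0: "0 \<le> w" unfolding w_def using assms by simp
  have AB0: "0 \<le> A+B" unfolding A_def B_def by simp
  have "2 powr (1+p) * (r-r\<^sup>2) powr p * w \<le> (A+B) * w"
    using weights[OF assms(1-3)] w0 unfolding A_def B_def by (intro mult_right_mono) auto
  also have "(A+B) * w \<le> (A+B) * ((u+v)/2)"
    using hconv[OF assms(4,5,2,3)] AB0 unfolding u_def v_def w_def by (intro mult_left_mono) auto
  also have "\<dots> \<le> A* u + B* v" using sg by (simp add: algebra_simps)
  finally show ?thesis unfolding A_def B_def u_def v_def w_def .
qed

lemma Kint:
  fixes x :: real assumes "0 \<le> x" "x < 1"
  shows "K x = integral {0..pi/2} (\<lambda>t. 1/sqrt(1 - x * (sin t)\<^sup>2))"
    and "(\<lambda>t. 1/sqrt(1 - x * (sin t)\<^sup>2)) integrable_on {0..pi/2}"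
proof -
  show "K x = integral {0..pi/2} (\<lambda>t. 1/sqrt(1 - x * (sin t)\<^sup>2))"
    unfolding K_def ellipK_def using assms by simp
  have pos: "1 - x * (sin t)\<^sup>2 > 0" for t
  proof -
    have "(sin t)\<^sup>2 \<le> 1" by (simp add: sin_squared_eq)
    hence "x * (sin t)\<^sup>2 \<le> x" using assms by (simp add: mult_left_le)
    thus ?thesis using assms by simp
  qed
  have "continuous_on {0..pi/2} (\<lambda>t. 1/sqrt(1 - x * (sin t)\<^sup>2))"
    using pos by (intro continuous_intros) (auto simp: less_imp_neq[symmetric])
  thus "(\<lambda>t. 1/sqrt(1 - x * (sin t)\<^sup>2)) integrable_on {0..pi/2}"
    by (rule integrable_continuous_interval)
qed

theorem mainTheorem14:
  fixes p r :: real
  assumes "p \<ge> 0" and "0 < r" and "r < 1"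
  shows "2 powr (1 + p) * K (1/2) * (r - r\<^sup>2) powr p
           \<le> (1 - r) powr p * K (1 - r) + r powr p * K r"
proof -
  define h where "h x t = 1/sqrt(1 - x * (sin t)\<^sup>2)" for x t :: real
  have I1: "h (1/2) integrable_on {0..pi/2}" and E1: "K (1/2) = integral {0..pi/2} (h (1/2))"
    using Kint[of "1/2"] unfolding h_def by auto
  have I2: "h (1-r) integrable_on {0..pi/2}" and E2: "K (1-r) = integral {0..pi/2} (h (1-r))"
    using Kint[of "1-r"] assms unfolding h_def by auto
  have I3: "h r integrable_on {0..pi/2}" and E3: "K r = integral {0..pi/2} (h r)"
    using Kint[of "r"] assms unfolding h_def by auto
  define c where "c = 2 powr (1 + p) * (r - r\<^sup>2) powr p"
  have "2 powr (1 + p) * K (1/2) * (r - r\<^sup>2) powr p = integral {0..pi/2} (\<lambda>t. c * h (1/2) t)"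
    unfolding E1 c_def by (simp add: integral_mult_right mult_ac)
  also have "\<dots> \<le> integral {0..pi/2} (\<lambda>t. (1 - r) powr p * h (1-r) t + r powr p * h r t)"
  proof (rule integral_le)
    show "(\<lambda>t. c * h (1/2) t) integrable_on {0..pi/2}" using integrable_on_cmult_left[OF I1, of c] by simp
    show "(\<lambda>t. (1 - r) powr p * h (1-r) t + r powr p * h r t) integrable_on {0..pi/2}"
      using integrable_on_cmult_left[OF I2, of "(1-r) powr p"] integrable_on_cmult_left[OF I3, of "r powr p"]
      by (intro integrable_add) simp_all
    fix t assume "t \<in> {0..pi/2}"
    have "(sin t)\<^sup>2 \<le> 1" by (simp add: sin_squared_eq)
    then show "c * h (1/2) t \<le> (1 - r) powr p * h (1-r) t + r powr p * h r t"
      unfolding c_def h_def using pw[OF assms, of "(sin t)\<^sup>2"] by simp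
  qed
  also have "\<dots> = (1 - r) powr p * K (1 - r) + r powr p * K r"
    unfolding E2 E3 using I2 I3
    using integrable_on_cmult_left[OF I2, of "(1-r) powr p"] integrable_on_cmult_left[OF I3, of "r powr p"]
    by (simp add: integral_add integral_mult_right)
  finally show ?thesis .
qed

end
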